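(* Let $T^-,T'^-\in\Omega^-$, $T^+,T'^+\in\Omega^+$, and let $X$ be a predicate variable or predicate symbol. (1) If $X$ is positive (resp. negative) in $T^-$, then $T^-[T'^-/X]\in\Omega^-$ (resp. $T^-[T'^+/X]\in\Omega^-$). (2) If $X$ is positive (resp. negative) in $T^+$, then $T^+[T'^+/X]\in\Omega^+$ (resp. $T^+[T'^-/X]\in\Omega^+$). (3) For any types $T,F$: if $T[F/X]\in\Omega^+$ (resp. $T[F/X]\in\Omega^-$), then $T\in\Omega^+$ (resp. $T\in\Omega^-$).
   Context: $TTR$ types: over a second-order language with first-order variables, function symbols, $n$-ary predicate variables and symbols; atomic $\perp$ and $X(t_1,\dots,t_n)$; constructors $\to$, $\forall x$, $\forall X$, and $\mu Cx_1\dots x_nA\langle t_1,\dots,t_n\rangle$ for $C$ an $n$-ary predicate symbol occurring and positive in $A$. Positivity: $X$ is positive and negative in $A$ if it does not occur in $A$; positive and not negative in $X(\bar t)$; positive (negative) in $B\to C$ iff negative (positive) in $B$ and positive (negative) in $C$; for $v\ne X$ positive (negative) in $\forall vB$ iff in $B$; positive (negative) in $\mu C\bar xB\langle\bar t\rangle$ iff in $B$. $T[F/X]$ denotes $T[F/X(x_1,\dots,x_n)]$: each atomic $X(t_1,\dots,t_n)$ is replaced by $F[t_1/x_1,\dots,t_n/x_n]$. $\Omega^+$ ($\forall$-positive) and $\Omega^-$ ($\forall$-negative): atomic types are in both; if $T^+\in\Omega^+$, $T^-\in\Omega^-$ then $T^-\to T^+\in\Omega^+$ and $T^+\to T^-\in\Omega^-$;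 if $T^+\in\Omega^+$ then $\forall xT^+,\forall XT^+\in\Omega^+$; if $T^-\in\Omega^-$ then $\forall xT^-\in\Omega^-$, and $\forall XT^-\in\Omega^-$ when $X$ is not free in $T^-$; if $T^+\in\Omega^+$ and $C$ is an $n$-ary predicate symbol occurring and positive in $T^+$ then $\mu Cx_1\dots x_nT^+\langle t_1,\dots,t_n\rangle\in\Omega^+$. *)

theory Defs
  imports Main
begin

text \<open>Syntax of TTR types in de Bruijn representation (all binders are nameless,
so substitution is automatically capture-avoiding).
  Predicates: predicate variables (PV i) and predicate symbols (PS i); both are
  de Bruijn indices in their own namespace (\<forall>X binds PV 0, \<mu>C binds PS 0);
  free predicate variables / symbols are the indices pointing outside all binders.\<close>

datatype trm = TV nat | TF nat "trm list"

datatype prd = PV nat | PS nat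

datatype ty =
    Bot
  | At prd "trm list"
  | Imp ty ty
  | AllI ty                    \<comment> \<open>\<forall>x A  (binds first-order index 0)\<close>
  | AllP ty                    \<comment> \<open>\<forall>X A  (binds predicate-variable index 0)\<close>
  | Mu ty "trm list"           \<comment> \<open>\<mu>C x1..xn A<t1..tn>, n = length of the term list;
                                   binds predicate-symbol index 0 and first-order indices 0..n-1\<close>

fun tsubst :: "(nat \<Rightarrow> trm) \<Rightarrow> trm \<Rightarrow> trm" where
  "tsubst \<sigma> (TV i) = \<sigma> i"
| "tsubst \<sigma> (TF f ts) = TF f (map (tsubst \<sigma>) ts)"

definition liftt :: "trm \<Rightarrow> trm" where
  "liftt = tsubst (\<lambda>i. TV (Suc i))"

definition upt_s :: "(nat \<Rightarrow> trm) \<Rightarrow> nat \<Rightarrow> trm" where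
  "upt_s \<sigma> = (\<lambda>i. case i of 0 \<Rightarrow> TV 0 | Suc j \<Rightarrow> liftt (\<sigma> j))"

definition liftr :: "(nat \<Rightarrow> nat) \<Rightarrow> nat \<Rightarrow> nat" where
  "liftr f = (\<lambda>i. case i of 0 \<Rightarrow> 0 | Suc j \<Rightarrow> Suc (f j))"

fun ty_tsubst :: "(nat \<Rightarrow> trm) \<Rightarrow> ty \<Rightarrow> ty" where
  "ty_tsubst \<sigma> Bot = Bot"
| "ty_tsubst \<sigma> (At p ts) = At p (map (tsubst \<sigma>) ts)"
| "ty_tsubst \<sigma> (Imp A B) = Imp (ty_tsubst \<sigma> A) (ty_tsubst \<sigma> B)"
| "ty_tsubst \<sigma> (AllI A) = AllI (ty_tsubst (upt_s \<sigma>) A)"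
| "ty_tsubst \<sigma> (AllP A) = AllP (ty_tsubst \<sigma> A)"
| "ty_tsubst \<sigma> (Mu A ts) = Mu (ty_tsubst ((upt_s ^^ length ts) \<sigma>) A) (map (tsubst \<sigma>) ts)"

fun ty_pren :: "(nat \<Rightarrow> nat) \<Rightarrow> (nat \<Rightarrow> nat) \<Rightarrow> ty \<Rightarrow> ty" where
  "ty_pren fv fs Bot = Bot"
| "ty_pren fv fs (At (PV i) ts) = At (PV (fv i)) ts"
| "ty_pren fv fs (At (PS i) ts) = At (PS (fs i)) ts"
| "ty_pren fv fs (Imp A B) = Imp (ty_pren fv fs A) (ty_pren fv fs B)"
| "ty_pren fv fs (AllI A) = AllI (ty_pren fv fs A)"
| "ty_pren fv fs (AllP A) = AllP (ty_pren (liftr fv) fs A)"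
| "ty_pren fv fs (Mu A ts) = Mu (ty_pren fv (liftr fs) A) ts"

text \<open>Shifting a predicate past a \<forall>X binder / a \<mu>C binder.\<close>
fun shP :: "prd \<Rightarrow> prd" where
  "shP (PV i) = PV (Suc i)" | "shP (PS i) = PS i"
fun shS :: "prd \<Rightarrow> prd" where
  "shS (PV i) = PV i" | "shS (PS i) = PS (Suc i)"

text \<open>Substitution T[F/X(x1,...,xn)]: every atom X(t1,...,tm) of T is replaced by
  F[t1/x1,...] (simultaneous substitution, free variables of F other than the
  x_i are left unchanged). k, a, b count the first-order, predicate-variable and
  predicate-symbol binders of T crossed so far.\<close>
fun psub :: "nat \<Rightarrow> nat \<Rightarrow> nat \<Rightarrow> prd \<Rightarrow> nat list \<Rightarrow> ty \<Rightarrow> ty \<Rightarrow> ty" where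
  "psub k a b X xs F Bot = Bot"
| "psub k a b X xs F (At p ts) =
     (if p = (shP ^^ a) ((shS ^^ b) X)
      then ty_tsubst (\<lambda>j. case map_of (zip xs ts) j of Some t \<Rightarrow> t | None \<Rightarrow> TV (j + k))
                     (ty_pren (\<lambda>i. i + a) (\<lambda>i. i + b) F)
      else At p ts)"
| "psub k a b X xs F (Imp A B) = Imp (psub k a b X xs F A) (psub k a b X xs F B)"
| "psub k a b X xs F (AllI A) = AllI (psub (Suc k) a b X xs F A)"
| "psub k a b X xs F (AllP A) = AllP (psub k (Suc a) b X xs F A)"
| "psub k a b X xs F (Mu A ts) = Mu (psub (k + length ts) a (Suc b) X xs F A) ts"

definition psubst :: "prd \<Rightarrow> nat list \<Rightarrow> ty \<Rightarrow> ty \<Rightarrow> ty" where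
  "psubst X xs F T = psub 0 0 0 X xs F T"

fun occ :: "prd \<Rightarrow> ty \<Rightarrow> bool" where
  "occ X Bot = False"
| "occ X (At p ts) = (p = X)"
| "occ X (Imp A B) = (occ X A \<or> occ X B)"
| "occ X (AllI A) = occ X A"
| "occ X (AllP A) = occ (shP X) A"
| "occ X (Mu A ts) = occ (shS X) A"

fun pos :: "prd \<Rightarrow> ty \<Rightarrow> bool" and neg :: "prd \<Rightarrow> ty \<Rightarrow> bool" where
  "pos X Bot = True"
| "neg X Bot = True"
| "pos X (At p ts) = True"
| "neg X (At p ts) = (p \<noteq> X)"
| "pos X (Imp A B) = (neg X A \<and> pos X B)"
| "neg X (Imp A B) = (pos X A \<and> neg X B)"
| "pos X (AllI A) = pos X A"
| "neg X (AllI A) = neg X A"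
| "pos X (AllP A) = pos (shP X) A"
| "neg X (AllP A) = neg (shP X) A"
| "pos X (Mu A ts) = pos (shS X) A"
| "neg X (Mu A ts) = neg (shS X) A"

fun is_type :: "ty \<Rightarrow> bool" where
  "is_type Bot = True"
| "is_type (At p ts) = True"
| "is_type (Imp A B) = (is_type A \<and> is_type B)"
| "is_type (AllI A) = is_type A"
| "is_type (AllP A) = is_type A"
| "is_type (Mu A ts) = (is_type A \<and> occ (PS 0) A \<and> pos (PS 0) A)"

inductive OmegaP :: "ty \<Rightarrow> bool" and OmegaN :: "ty \<Rightarrow> bool" where
  P_Bot: "OmegaP Bot"
| P_At: "OmegaP (At p ts)"
| N_Bot: "OmegaN Bot"
| N_At: "OmegaN (At p ts)"
| P_Imp: "OmegaN A \<Longrightarrow> OmegaP B \<Longrightarrow> OmegaP (Imp A B)"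
| N_Imp: "OmegaP A \<Longrightarrow> OmegaN B \<Longrightarrow> OmegaN (Imp A B)"
| P_AllI: "OmegaP A \<Longrightarrow> OmegaP (AllI A)"
| P_AllP: "OmegaP A \<Longrightarrow> OmegaP (AllP A)"
| N_AllI: "OmegaN A \<Longrightarrow> OmegaN (AllI A)"
| N_AllP: "OmegaN A \<Longrightarrow> \<not> occ (PV 0) A \<Longrightarrow> OmegaN (AllP A)"
| P_Mu: "OmegaP A \<Longrightarrow> occ (PS 0) A \<Longrightarrow> pos (PS 0) A \<Longrightarrow> OmegaP (Mu A ts)"

end

theory Submission
  imports Defs
begin

inductive_simps OP_Imp: "OmegaP (Imp A B)"
inductive_simps ON_Imp: "OmegaN (Imp A B)"
inductive_simps OP_AllI: "OmegaP (AllI A)"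
inductive_simps ON_AllI: "OmegaN (AllI A)"
inductive_simps OP_AllP: "OmegaP (AllP A)"
inductive_simps ON_AllP: "OmegaN (AllP A)"
inductive_simps OP_Mu: "OmegaP (Mu A ts)"
inductive_simps ON_Mu: "OmegaN (Mu A ts)"

lemmas Om_simps = OP_Imp ON_Imp OP_AllI ON_AllI OP_AllP ON_AllP OP_Mu ON_Mu

fun ren :: "(nat \<Rightarrow> nat) \<Rightarrow> (nat \<Rightarrow> nat) \<Rightarrow> prd \<Rightarrow> prd" where
  "ren fv fs (PV i) = PV (fv i)" | "ren fv fs (PS i) = PS (fs i)"

lemma shP_inj[simp]: "shP x = shP y \<longleftrightarrow> x = y"
  by (cases x; cases y) auto
lemma shS_inj[simp]: "shS x = shS y \<longleftrightarrow> x = y"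
  by (cases x; cases y) auto
lemma shPS_comm: "shP (shS y) = shS (shP y)"
  by (cases y) auto
lemma funpow_shP_shS[simp]: "(shP^^a) (shS y) = shS ((shP^^a) y)"
  by (induction a) (auto simp: shPS_comm)
lemma shP_PS_iff[simp]: "shP y = PS i \<longleftrightarrow> y = PS i" by (cases y) auto
lemma funpow_shP_PS[simp]: "(shP^^a) y = PS i \<longleftrightarrow> y = PS i"
  by (induction a) auto
lemma shS_ne_PS0[simp]: "shS y \<noteq> PS 0" by (cases y) auto
lemma shP_ne_PV0[simp]: "shP y \<noteq> PV 0" by (cases y) auto
lemma PV0_ne_shP[simp]: "PV 0 \<noteq> shP y" by (cases y) auto
lemma PS0_ne_shS[simp]: "PS 0 \<noteq> shS y" by (cases y) auto
lemma ren_liftr_PV0[simp]: "PV 0 = ren (liftr fv) fs Z' \<longleftrightarrow> Z' = PV 0"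
  by (cases Z') (auto simp: liftr_def split: nat.splits)
lemma ren_liftr_PS0[simp]: "PS 0 = ren fv (liftr fs) Z' \<longleftrightarrow> Z' = PS 0"
  by (cases Z') (auto simp: liftr_def split: nat.splits)
lemma ren_liftr_PV0'[simp]: "ren (liftr fv) fs Z' = PV 0 \<longleftrightarrow> Z' = PV 0"
  by (cases Z') (auto simp: liftr_def split: nat.splits)
lemma ren_liftr_PS0'[simp]: "ren fv (liftr fs) Z' = PS 0 \<longleftrightarrow> Z' = PS 0"
  by (cases Z') (auto simp: liftr_def split: nat.splits)
lemma ren_Suc_PV0[simp]: "PV 0 \<noteq> ren (\<lambda>i. Suc (i + a)) g Z'"
  by (cases Z') auto
lemma ren_Suc_PS0[simp]: "PS 0 \<noteq> ren f (\<lambda>i. Suc (i + b)) Z'"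
  by (cases Z') auto

lemma ren_liftr_shP: "ren (liftr fv) fs (shP Z') = shP (ren fv fs Z')"
  by (cases Z') (auto simp: liftr_def)
lemma ren_liftr_shS: "ren fv (liftr fs) (shS Z') = shS (ren fv fs Z')"
  by (cases Z') (auto simp: liftr_def)

lemma shP_ren: "shP Z = ren (liftr fv) fs Z'' \<longleftrightarrow> (\<exists>Z'. Z'' = shP Z' \<and> Z = ren fv fs Z')"
proof
  assume h: "shP Z = ren (liftr fv) fs Z''"
  show "\<exists>Z'. Z'' = shP Z' \<and> Z = ren fv fs Z'"
  proof (cases Z'')
    case (PV n)
    show ?thesis
    proof (cases n)
      case 0 then show ?thesis using h PV by (simp add: liftr_def)
    next
      case (Suc m)
      have "Z = PV (fv m)" using h PV Suc by (cases Z) (simp_all add: liftr_def)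
      then show ?thesis using PV Suc by (intro exI[of _ "PV m"]) simp
    qed
  next
    case (PS n)
    have "Z = PS (fs n)" using h PS by (cases Z) simp_all
    then show ?thesis using PS by (intro exI[of _ "PS n"]) simp
  qed
qed (auto simp: ren_liftr_shP)

lemma shS_ren: "shS Z = ren fv (liftr fs) Z'' \<longleftrightarrow> (\<exists>Z'. Z'' = shS Z' \<and> Z = ren fv fs Z')"
proof
  assume h: "shS Z = ren fv (liftr fs) Z''"
  show "\<exists>Z'. Z'' = shS Z' \<and> Z = ren fv fs Z'"
  proof (cases Z'')
    case (PS n)
    show ?thesis
    proof (cases n)
      case 0 then show ?thesis using h PS by (simp add: liftr_def)
    next
      case (Suc m)
      have "Z = PS (fs m)" using h PS Suc by (cases Z) (simp_all add: liftr_def)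
      then show ?thesis using PS Suc by (intro exI[of _ "PS m"]) simp
    qed
  next
    case (PV n)
    have "Z = PV (fv n)" using h PV by (cases Z) simp_all
    then show ?thesis using PV by (intro exI[of _ "PV n"]) simp
  qed
qed (auto simp: ren_liftr_shS)

lemma occ_pren: "occ Z (ty_pren fv fs G) \<longleftrightarrow> (\<exists>Z'. occ Z' G \<and> Z = ren fv fs Z')"
proof (induction fv fs G arbitrary: Z rule: ty_pren.induct)
  case (6 fv fs A) then show ?case by (auto simp: shP_ren)
next
  case (7 fv fs A ts) then show ?case by (auto simp: shS_ren)
qed auto

lemma pos_pren:
  "((\<forall>Z'. ren fv fs Z' = Z \<longrightarrow> pos Z' G) \<longrightarrow> pos Z (ty_pren fv fs G)) \<and>
   ((\<forall>Z'. ren fv fs Z' = Z \<longrightarrow> neg Z' G) \<longrightarrow> neg Z (ty_pren fv fs G))"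
proof (induction fv fs G arbitrary: Z rule: ty_pren.induct)
  case (6 fv fs A)
  have h: "\<And>Z''. ren (liftr fv) fs Z'' = shP Z \<Longrightarrow> \<exists>Z'. Z'' = shP Z' \<and> Z = ren fv fs Z'"
    using shP_ren by metis
  show ?case
  proof (intro conjI impI)
    assume H: "\<forall>Z'. ren fv fs Z' = Z \<longrightarrow> pos Z' (AllP A)"
    have "\<forall>Z''. ren (liftr fv) fs Z'' = shP Z \<longrightarrow> pos Z'' A" using h H by fastforce
    then show "pos Z (ty_pren fv fs (AllP A))" using 6[of "shP Z"] by simp
  next
    assume H: "\<forall>Z'. ren fv fs Z' = Z \<longrightarrow> neg Z' (AllP A)"
    have "\<forall>Z''. ren (liftr fv) fs Z'' = shP Z \<longrightarrow> neg Z'' A" using h H by fastforce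
    then show "neg Z (ty_pren fv fs (AllP A))" using 6[of "shP Z"] by simp
  qed
next
  case (7 fv fs A ts)
  have h: "\<And>Z''. ren fv (liftr fs) Z'' = shS Z \<Longrightarrow> \<exists>Z'. Z'' = shS Z' \<and> Z = ren fv fs Z'"
    using shS_ren by metis
  show ?case
  proof (intro conjI impI)
    assume H: "\<forall>Z'. ren fv fs Z' = Z \<longrightarrow> pos Z' (Mu A ts)"
    have "\<forall>Z''. ren fv (liftr fs) Z'' = shS Z \<longrightarrow> pos Z'' A" using h H by fastforce
    then show "pos Z (ty_pren fv fs (Mu A ts))" using 7[of "shS Z"] by simp
  next
    assume H: "\<forall>Z'. ren fv fs Z' = Z \<longrightarrow> neg Z' (Mu A ts)"
    have "\<forall>Z''. ren fv (liftr fs) Z'' = shS Z \<longrightarrow> neg Z'' A" using h H by fastforce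
    then show "neg Z (ty_pren fv fs (Mu A ts))" using 7[of "shS Z"] by simp
  qed
next
  case (2 fv fs i ts) then show ?case by (auto dest: spec[where x="PV i"])
next
  case (3 fv fs i ts) then show ?case by (auto dest: spec[where x="PS i"])
qed auto

lemma occ_tsub[simp]: "occ Z (ty_tsubst \<sigma> G) = occ Z G"
  by (induction G arbitrary: \<sigma> Z) simp_all
lemma pos_tsub[simp]: "pos Z (ty_tsubst \<sigma> G) = pos Z G" "neg Z (ty_tsubst \<sigma> G) = neg Z G"
  by (induction G arbitrary: \<sigma> Z) simp_all

lemma Om_tsub: "OmegaP T \<Longrightarrow> OmegaP (ty_tsubst \<sigma> T)" "OmegaN T' \<Longrightarrow> OmegaN (ty_tsubst \<sigma> T')"
  by (induction arbitrary: \<sigma> and \<sigma> rule: OmegaP_OmegaN.inducts)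
     (auto intro: OmegaP_OmegaN.intros)

lemma Om_pren: "OmegaP T \<Longrightarrow> OmegaP (ty_pren fv fs T)" "OmegaN T' \<Longrightarrow> OmegaN (ty_pren fv fs T')"
proof (induction arbitrary: fv fs and fv fs rule: OmegaP_OmegaN.inducts)
  case (P_At p ts) then show ?case by (cases p) (auto intro: OmegaP_OmegaN.intros)
next
  case (N_At p ts) then show ?case by (cases p) (auto intro: OmegaP_OmegaN.intros)
next
  case (N_AllP A)
  have "\<not> occ (PV 0) (ty_pren (liftr fv) fs A)"
    using N_AllP by (auto simp: occ_pren)
  then show ?case using N_AllP by (auto intro: OmegaP_OmegaN.intros)
next
  case (P_Mu A ts)
  have "occ (PS 0) (ty_pren fv (liftr fs) A)"
    using P_Mu by (auto simp: occ_pren)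
  moreover have "pos (PS 0) (ty_pren fv (liftr fs) A)"
    using P_Mu pos_pren[of fv "liftr fs" "PS 0" A] by auto
  ultimately show ?case using P_Mu by (auto intro: OmegaP_OmegaN.intros)
qed (auto intro: OmegaP_OmegaN.intros)

lemma notocc_posneg: "\<not> occ Z G \<Longrightarrow> pos Z G \<and> neg Z G"
  by (induction G arbitrary: Z) auto

lemma occ_keep: "occ Z T \<Longrightarrow> Z \<noteq> (shP^^a) ((shS^^b) X) \<Longrightarrow> occ Z (psub k a b X xs F T)"
  by (induction T arbitrary: k a b Z) auto

lemma shP_ren2: "shP Z = ren (\<lambda>i. Suc (i + a)) g Z' \<longleftrightarrow> Z = ren (\<lambda>i. i + a) g Z'"
  by (cases Z; cases Z') auto
lemma shS_ren2: "shS Z = ren f (\<lambda>i. Suc (i + b)) Z' \<longleftrightarrow> Z = ren f (\<lambda>i. i + b) Z'"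
  by (cases Z; cases Z') auto

lemma occF_P: "occ (shP Z) (ty_pren (\<lambda>i. i + Suc a) (\<lambda>i. i + b) F) \<longleftrightarrow> occ Z (ty_pren (\<lambda>i. i + a) (\<lambda>i. i + b) F)"
  by (simp add: occ_pren shP_ren2)
lemma occF_S: "occ (shS Z) (ty_pren (\<lambda>i. i + a) (\<lambda>i. i + Suc b) F) \<longleftrightarrow> occ Z (ty_pren (\<lambda>i. i + a) (\<lambda>i. i + b) F)"
  by (simp add: occ_pren shS_ren2)

lemma occ_sub: "occ Z (psub k a b X xs F T) \<Longrightarrow> occ Z T \<or> occ Z (ty_pren (\<lambda>i. i + a) (\<lambda>i. i + b) F)"
proof (induction T arbitrary: k a b Z)
  case (AllP A) then show ?case using occF_P by fastforce
next
  case (Mu A ts) then show ?case using occF_S by fastforce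
next
  case (Imp A B) then show ?case by (metis occ.simps(3) psub.simps(3))
qed (auto split: if_splits)

lemma pos_sub: "\<not> occ Z (ty_pren (\<lambda>i. i + a) (\<lambda>i. i + b) F) \<Longrightarrow>
  (pos Z T \<longrightarrow> pos Z (psub k a b X xs F T)) \<and> (neg Z T \<longrightarrow> neg Z (psub k a b X xs F T))"
proof (induction T arbitrary: k a b Z)
  case (At p ts) then show ?case using notocc_posneg by auto
next
  case (AllP A) then show ?case using occF_P by fastforce
next
  case (Mu A ts) then show ?case using occF_S by fastforce
qed auto

lemma main:
  "OmegaP T \<Longrightarrow> (OmegaP F \<longrightarrow> pos ((shP^^a) ((shS^^b) X)) T \<longrightarrow> OmegaP (psub k a b X xs F T)) \<and>
     (OmegaN F \<longrightarrow> neg ((shP^^a) ((shS^^b) X)) T \<longrightarrow> OmegaP (psub k a b X xs F T))"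
  "OmegaN T' \<Longrightarrow> (OmegaN F \<longrightarrow> pos ((shP^^a) ((shS^^b) X)) T' \<longrightarrow> OmegaN (psub k a b X xs F T')) \<and>
     (OmegaP F \<longrightarrow> neg ((shP^^a) ((shS^^b) X)) T' \<longrightarrow> OmegaN (psub k a b X xs F T'))"
proof (induction arbitrary: k a b and k a b rule: OmegaP_OmegaN.inducts)
  case (P_At p ts) then show ?case by (auto intro: OmegaP_OmegaN.intros Om_tsub Om_pren)
next
  case (N_At p ts) then show ?case by (auto intro: OmegaP_OmegaN.intros Om_tsub Om_pren)
next
  case (N_AllP A)
  have "\<not> occ (PV 0) (psub k (Suc a) b X xs F A)"
  proof
    assume "occ (PV 0) (psub k (Suc a) b X xs F A)"
    then have "occ (PV 0) A \<or> occ (PV 0) (ty_pren (\<lambda>i. i + Suc a) (\<lambda>i. i + b) F)" by (rule occ_sub)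
    then show False using N_AllP by (auto simp: occ_pren)
  qed
  then show ?case using N_AllP.IH[where k=k and a="Suc a" and b=b] by (auto intro: OmegaP_OmegaN.intros)
next
  case (P_Mu A ts)
  have t: "PS 0 \<noteq> (shP^^a) ((shS^^Suc b) X)" by simp
  have o: "occ (PS 0) (psub (k + length ts) a (Suc b) X xs F A)"
    by (rule occ_keep[OF P_Mu.hyps(2) t])
  have n: "\<not> occ (PS 0) (ty_pren (\<lambda>i. i + a) (\<lambda>i. i + Suc b) F)"
    by (auto simp: occ_pren elim!: ren.elims)
  have p: "pos (PS 0) (psub (k + length ts) a (Suc b) X xs F A)"
    using pos_sub[OF n] P_Mu.hyps(3) by blast
  show ?case using P_Mu.IH[where k="k + length ts" and a=a and b="Suc b"] o p by (auto intro: OmegaP_OmegaN.intros)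
qed (auto intro: OmegaP_OmegaN.intros)

lemma backw: "is_type T \<Longrightarrow> (OmegaP (psub k a b X xs F T) \<longrightarrow> OmegaP T) \<and> (OmegaN (psub k a b X xs F T) \<longrightarrow> OmegaN T)"
proof (induction T arbitrary: k a b)
  case (AllP A)
  show ?case
  proof (intro conjI impI)
    assume "OmegaP (psub k a b X xs F (AllP A))"
    then show "OmegaP (AllP A)" using AllP by (auto simp: Om_simps)
  next
    assume h: "OmegaN (psub k a b X xs F (AllP A))"
    then have "\<not> occ (PV 0) (psub k (Suc a) b X xs F A)" by (auto simp: Om_simps)
    then have "\<not> occ (PV 0) A" using occ_keep[of "PV 0" A "Suc a" b X k xs F] by auto
    then show "OmegaN (AllP A)" using AllP h by (auto simp: Om_simps)
  qed
qed (auto simp: Om_simps intro: OmegaP_OmegaN.intros)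

theorem lemma5p1:
  fixes X :: prd and xs :: "nat list"
  shows
   "(\<forall>Tm Fm. OmegaN Tm \<longrightarrow> OmegaN Fm \<longrightarrow> pos X Tm \<longrightarrow> OmegaN (psubst X xs Fm Tm)) \<and>
    (\<forall>Tm Fp. OmegaN Tm \<longrightarrow> OmegaP Fp \<longrightarrow> neg X Tm \<longrightarrow> OmegaN (psubst X xs Fp Tm)) \<and>
    (\<forall>Tp Fp. OmegaP Tp \<longrightarrow> OmegaP Fp \<longrightarrow> pos X Tp \<longrightarrow> OmegaP (psubst X xs Fp Tp)) \<and>
    (\<forall>Tp Fm. OmegaP Tp \<longrightarrow> OmegaN Fm \<longrightarrow> neg X Tp \<longrightarrow> OmegaP (psubst X xs Fm Tp)) \<and>
    (\<forall>T F. is_type T \<longrightarrow> is_type F \<longrightarrow>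
        (OmegaP (psubst X xs F T) \<longrightarrow> OmegaP T) \<and>
        (OmegaN (psubst X xs F T) \<longrightarrow> OmegaN T))"
proof -
  have m1: "\<And>T F. OmegaP T \<Longrightarrow> (OmegaP F \<longrightarrow> pos X T \<longrightarrow> OmegaP (psub 0 0 0 X xs F T)) \<and>
     (OmegaN F \<longrightarrow> neg X T \<longrightarrow> OmegaP (psub 0 0 0 X xs F T))"
    using main(1)[where a=0 and b=0 and k=0 and X=X and xs=xs] by simp
  have m2: "\<And>T F. OmegaN T \<Longrightarrow> (OmegaN F \<longrightarrow> pos X T \<longrightarrow> OmegaN (psub 0 0 0 X xs F T)) \<and>
     (OmegaP F \<longrightarrow> neg X T \<longrightarrow> OmegaN (psub 0 0 0 X xs F T))"
    using main(2)[where a=0 and b=0 and k=0 and X=X and xs=xs] by simp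
  have m3: "\<And>T F. is_type T \<Longrightarrow> (OmegaP (psub 0 0 0 X xs F T) \<longrightarrow> OmegaP T) \<and> (OmegaN (psub 0 0 0 X xs F T) \<longrightarrow> OmegaN T)"
    by (rule backw)
  show ?thesis unfolding psubst_def
    using m1 m2 m3 by blast
qed

end
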